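(* Let $\mathcal{B}=(T,\bowtie)$ be a block and $(B_1,\dots,B_k)$ a legal partition of $T$ with $k$ sets. Then the schedule $\mathcal S=\mathrm{LevelSchedule}(B_1,\dots,B_k)$ satisfies $\mathrm{Depth}((T,\mathcal S))\le k$, where $\mathrm{Depth}$ is the maximum number of vertices on a directed path.
   Context: A block consists of a finite set $T$ of transactions with a symmetric irreflexive conflict relation $\bowtie$. A set is conflict-free if no two elements conflict; a legal partition of $T$ is an ordered sequence of pairwise disjoint conflict-free sets with union $T$. $\mathrm{LevelSchedule}(B_1,\dots,B_k)$: set $B_0=\emptyset$, $\mathcal S=\emptyset$; for $i=1,\dots,k$ and, for each $i$, for $j=i-1,\dots,0$ (decreasing): let $E=\{(u,v)\in B_j\times B_i: u\bowtie v\}$, let $P$ be the set of pairs $(x,y)$ with a directed path from $x$ to $y$ in the current directed graph $(T,\mathcal S)$, and set $\mathcal S\leftarrow\mathcal S\cup(E\setminus P)$; output $\mathcal S$. *)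

theory Defs
  imports Main
begin

definition conflict_free :: "('a \<Rightarrow> 'a \<Rightarrow> bool) \<Rightarrow> 'a set \<Rightarrow> bool" where
  "conflict_free R A = (\<forall>x\<in>A. \<forall>y\<in>A. \<not> R x y)"

definition legal_partition :: "'a set \<Rightarrow> ('a \<Rightarrow> 'a \<Rightarrow> bool) \<Rightarrow> 'a set list \<Rightarrow> bool" where
  "legal_partition T R Bs =
     ((\<forall>i<length Bs. conflict_free R (Bs ! i)) \<and>
      (\<forall>i<length Bs. \<forall>j<length Bs. i \<noteq> j \<longrightarrow> Bs ! i \<inter> Bs ! j = {}) \<and>
      \<Union>(set Bs) = T)"

text \<open>Level i of the partition, 1-based, with B_0 = {}.\<close>
definition level :: "'a set list \<Rightarrow> nat \<Rightarrow> 'a set" where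
  "level Bs i = (if i = 0 then {} else Bs ! (i - 1))"

definition ls_step :: "('a \<Rightarrow> 'a \<Rightarrow> bool) \<Rightarrow> 'a set list \<Rightarrow> nat \<times> nat \<Rightarrow> ('a \<times> 'a) set \<Rightarrow> ('a \<times> 'a) set" where
  "ls_step R Bs ij S =
     (let E = {(u, v). u \<in> level Bs (snd ij) \<and> v \<in> level Bs (fst ij) \<and> R u v}
      in S \<union> (E - S\<^sup>+))"

definition ls_order :: "nat \<Rightarrow> (nat \<times> nat) list" where
  "ls_order k = concat (map (\<lambda>i. map (\<lambda>j. (i, j)) (rev [0..<i])) [1..<k + 1])"

definition LevelSchedule :: "('a \<Rightarrow> 'a \<Rightarrow> bool) \<Rightarrow> 'a set list \<Rightarrow> ('a \<times> 'a) set" where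
  "LevelSchedule R Bs = fold (ls_step R Bs) (ls_order (length Bs)) {}"

definition is_dpath :: "'a set \<Rightarrow> ('a \<times> 'a) set \<Rightarrow> 'a list \<Rightarrow> bool" where
  "is_dpath T S xs = (xs \<noteq> [] \<and> distinct xs \<and> set xs \<subseteq> T \<and>
      (\<forall>i. Suc i < length xs \<longrightarrow> (xs ! i, xs ! Suc i) \<in> S))"

text \<open>Depth: maximum number of vertices on a directed path (0 for the empty graph).\<close>
definition Depth :: "'a set \<Rightarrow> ('a \<times> 'a) set \<Rightarrow> nat" where
  "Depth T S = Sup {length xs | xs. is_dpath T S xs}"

end

theory Submission
  imports Defs
begin

definition good :: "'a set list \<Rightarrow> ('a \<times> 'a) set \<Rightarrow> bool" where
  "good Bs S = (\<forall>u v. (u, v) \<in> S \<longrightarrow> (\<exists>i j. j < i \<and> i < length Bs \<and> u \<in> Bs ! j \<and> v \<in> Bs ! i))"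

lemma order_prop: "p \<in> set (ls_order k) \<Longrightarrow> snd p < fst p \<and> fst p \<le> k"
  unfolding ls_order_def by auto

lemma step_good:
  assumes "good Bs S" "snd p < fst p" "fst p \<le> length Bs"
  shows "good Bs (ls_step R Bs p S)"
proof -
  obtain i j where p: "p = (i, j)" by (cases p)
  have "\<exists>i' j'. j' < i' \<and> i' < length Bs \<and> u \<in> Bs ! j' \<and> v \<in> Bs ! i'"
    if "u \<in> level Bs j" "v \<in> level Bs i" for u v
  proof -
    have "j \<noteq> 0" using that(1) by (auto simp: level_def split: if_splits)
    then show ?thesis using that assms(2,3) p
      by (intro exI[of _ "i - 1"] exI[of _ "j - 1"]) (auto simp: level_def split: if_splits)
  qed
  then show ?thesis using assms(1) p unfolding good_def ls_step_def Let_def by auto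
qed

lemma fold_good:
  "(\<forall>p\<in>set ps. snd p < fst p \<and> fst p \<le> length Bs) \<Longrightarrow> good Bs S \<Longrightarrow> good Bs (fold (ls_step R Bs) ps S)"
  by (induction ps arbitrary: S) (auto intro: step_good)

lemma LS_good: "good Bs (LevelSchedule R Bs)"
  unfolding LevelSchedule_def
  by (rule fold_good) (auto dest: order_prop simp: good_def)

lemma path_len:
  assumes lp: "legal_partition T R Bs" and g: "good Bs S" and p: "is_dpath T S xs"
  shows "length xs \<le> length Bs"
proof -
  have disj: "\<And>i j x. i < length Bs \<Longrightarrow> j < length Bs \<Longrightarrow> x \<in> Bs ! i \<Longrightarrow> x \<in> Bs ! j \<Longrightarrow> i = j"
    using lp unfolding legal_partition_def by blast
  have inT: "\<And>x. x \<in> T \<Longrightarrow> \<exists>i < length Bs. x \<in> Bs ! i"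
    using lp unfolding legal_partition_def by (auto simp: in_set_conv_nth)
  have claim: "m < length xs \<Longrightarrow> \<exists>i < length Bs. xs ! m \<in> Bs ! i \<and> m \<le> i" for m
  proof (induction m)
    case 0
    then have "xs ! 0 \<in> T" using p unfolding is_dpath_def by auto
    then show ?case using inT by auto
  next
    case (Suc m)
    then obtain i where i: "i < length Bs" "xs ! m \<in> Bs ! i" "m \<le> i" by auto
    have "(xs ! m, xs ! Suc m) \<in> S" using p Suc.prems unfolding is_dpath_def by auto
    then obtain i' j' where e: "j' < i'" "i' < length Bs" "xs ! m \<in> Bs ! j'" "xs ! Suc m \<in> Bs ! i'"
      using g unfolding good_def by blast
    have "i = j'" using disj[OF i(1) _ i(2) e(3)] e by auto
    then show ?case using e i by (intro exI[of _ i']) auto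
  qed
  have "xs \<noteq> []" using p unfolding is_dpath_def by auto
  then have "length xs - 1 < length xs" by simp
  from claim[OF this] show ?thesis by auto
qed

theorem lemma8:
  fixes T :: "'a set" and R :: "'a \<Rightarrow> 'a \<Rightarrow> bool" and Bs :: "'a set list"
  assumes "finite T"
    and "symp R" and "irreflp R"
    and "legal_partition T R Bs"
  shows "Depth T (LevelSchedule R Bs) \<le> length Bs"
proof -
  let ?X = "{length xs | xs. is_dpath T (LevelSchedule R Bs) xs}"
  have b: "\<forall>n\<in>?X. n \<le> length Bs"
    using path_len[OF assms(4) LS_good] by auto
  show ?thesis
  proof (cases "?X = {}")
    case True
    then show ?thesis unfolding Depth_def by simp
  next
    case False
    then show ?thesis unfolding Depth_def using b by (intro cSup_least) auto
  qed
qed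

end
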